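(* Let $q$ be a prime power and $L\in\mathbb{F}_q[x]$ a $q$-polynomial such that $L(x)/x$ is irreducible over $\mathbb{F}_q$. Then $L$ is not a $q^s$-polynomial for any integer $s>1$.
   Context: A $q$-polynomial is $\sum_{i=0}^n a_ix^{q^i}$; it is a $q^s$-polynomial if it has the form $\sum_{i=0}^m b_ix^{q^{is}}$, i.e. only exponents $q^j$ with $s\mid j$ occur. *)

theory Defs
  imports "HOL-Computational_Algebra.Polynomial" "HOL-Library.Cardinality"
begin

definition is_q_poly :: "nat \<Rightarrow> 'a::comm_ring_1 poly \<Rightarrow> bool" where
  "is_q_poly q L \<longleftrightarrow> (\<forall>n. coeff L n \<noteq> 0 \<longrightarrow> (\<exists>i. n = q ^ i))"

definition is_q_s_poly :: "nat \<Rightarrow> nat \<Rightarrow> 'a::comm_ring_1 poly \<Rightarrow> bool" where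
  "is_q_s_poly q s L \<longleftrightarrow> (\<forall>n. coeff L n \<noteq> 0 \<longrightarrow> (\<exists>j. n = q ^ j \<and> s dvd j))"

end

theory Submission
  imports Defs "HOL-Number_Theory.Cong" "HOL-Library.FuncSet" "HOL-Computational_Algebra.Polynomial_Factorial"
begin

definition fspan :: "'a::field set \<Rightarrow> 'a set" where
  "fspan A = range (\<lambda>c. \<Sum>a\<in>A. of_nat (c a) * a)"

lemma fspanI: "(\<Sum>a\<in>A. of_nat (c a) * a) \<in> fspan A"
  unfolding fspan_def by (rule rangeI)

lemma fspan_smult: "x \<in> fspan A \<Longrightarrow> of_nat k * x \<in> fspan A"
proof -
  assume "x \<in> fspan A"
  then obtain c where x: "x = (\<Sum>a\<in>A. of_nat (c a) * a)" by (auto simp: fspan_def)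
  have "of_nat k * x = (\<Sum>a\<in>A. of_nat (k * c a) * a)"
    unfolding x by (simp add: sum_distrib_left mult.assoc)
  thus ?thesis using fspanI[of "\<lambda>a. k * c a" A] by simp
qed

lemma fspan_add: "x \<in> fspan A \<Longrightarrow> y \<in> fspan A \<Longrightarrow> x + y \<in> fspan A"
proof -
  assume "x \<in> fspan A" "y \<in> fspan A"
  then obtain c d where x: "x = (\<Sum>a\<in>A. of_nat (c a) * a)" and y: "y = (\<Sum>a\<in>A. of_nat (d a) * a)"
    by (auto simp: fspan_def)
  have "x + y = (\<Sum>a\<in>A. of_nat (c a + d a) * a)"
    unfolding x y by (simp add: sum.distrib distrib_right)
  thus ?thesis using fspanI[of "\<lambda>a. c a + d a" A] by simp
qed

lemma fspan_zero: "0 \<in> fspan A"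
  using fspanI[of "\<lambda>_. 0::nat" A] by simp

lemma of_nat_CHAR_minus1: "CHAR('a::field) > 0 \<Longrightarrow> (of_nat (CHAR('a) - 1) :: 'a) = -1"
proof -
  assume "CHAR('a) > 0"
  hence "CHAR('a) - 1 + 1 = CHAR('a)" by simp
  hence "(of_nat (CHAR('a) - 1 + 1) :: 'a) = of_nat CHAR('a)" by (simp only:)
  hence "(of_nat (CHAR('a) - 1) :: 'a) + 1 = of_nat CHAR('a)" by (simp only: of_nat_add of_nat_1)
  thus ?thesis by (simp add: eq_neg_iff_add_eq_0)
qed

lemma fspan_neg: "CHAR('a::field) > 0 \<Longrightarrow> (x::'a) \<in> fspan A \<Longrightarrow> -x \<in> fspan A"
  using fspan_smult[of x A "CHAR('a) - 1"] of_nat_CHAR_minus1 by force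

lemma fspan_diff: "CHAR('a::field) > 0 \<Longrightarrow> (x::'a) \<in> fspan A \<Longrightarrow> y \<in> fspan A \<Longrightarrow> x - y \<in> fspan A"
proof -
  assume c: "CHAR('a) > 0" and x: "x \<in> fspan A" and y: "y \<in> fspan A"
  have "-y \<in> fspan A" by (rule fspan_neg[OF c y])
  from fspan_add[OF x this] show ?thesis by (simp only: diff_conv_add_uminus)
qed

lemma of_nat_mod_CHAR: "(of_nat (n mod CHAR('a)) :: 'a::field) = of_nat n"
  by (simp add: of_nat_eq_iff_cong_CHAR cong_def)

lemma fspan_insert:
  fixes a :: "'a::field"
  assumes "finite A" "a \<notin> A" "CHAR('a::field) > 0"
  shows "fspan (insert a A) = (\<lambda>(j,t). of_nat j * a + t) ` ({..<CHAR('a)} \<times> fspan A)"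
proof
  show "fspan (insert a A) \<subseteq> (\<lambda>(j,t). of_nat j * a + t) ` ({..<CHAR('a)} \<times> fspan A)"
  proof
    fix x assume "x \<in> fspan (insert a A)"
    then obtain c where x: "x = (\<Sum>b\<in>insert a A. of_nat (c b) * b)" by (auto simp: fspan_def)
    have m: "of_nat (c a mod CHAR('a)) = (of_nat (c a)::'a)" by (rule of_nat_mod_CHAR)
    have "x = of_nat (c a mod CHAR('a)) * a + (\<Sum>b\<in>A. of_nat (c b) * b)"
      by (subst m) (simp add: x assms)
    moreover have "(\<Sum>b\<in>A. of_nat (c b) * b) \<in> fspan A" by (auto simp: fspan_def)
    moreover have "c a mod CHAR('a) < CHAR('a)" using assms by simp
    ultimately show "x \<in> (\<lambda>(j,t). of_nat j * a + t) ` ({..<CHAR('a)} \<times> fspan A)"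
      by force
  qed
next
  show "(\<lambda>(j,t). of_nat j * a + t) ` ({..<CHAR('a)} \<times> fspan A) \<subseteq> fspan (insert a A)"
  proof clarify
    fix j t assume "t \<in> fspan A"
    then obtain c where t: "t = (\<Sum>b\<in>A. of_nat (c b) * b)" by (auto simp: fspan_def)
    have "(\<Sum>b\<in>A. of_nat ((c(a:=j)) b) * b) = t"
      unfolding t using assms by (intro sum.cong) auto
    hence "of_nat j * a + t = (\<Sum>b\<in>insert a A. of_nat ((c(a:=j)) b) * b)"
      using assms by simp
    thus "of_nat j * a + t \<in> fspan (insert a A)" unfolding fspan_def by blast
  qed
qed

lemma fspan_inj:
  fixes a :: "'a::field"
  assumes "a \<notin> fspan A" "CHAR('a::field) > 0"
  shows "inj_on (\<lambda>(j,t). of_nat j * a + t) ({..<CHAR('a)} \<times> fspan A)"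
proof -
  have p: "prime CHAR('a)" using assms(2) prime_CHAR_semidom by blast
  have key: False if "j < j'" "j' < CHAR('a)" "t \<in> fspan A" "t' \<in> fspan A"
     "of_nat j * a + t = of_nat j' * a + (t'::'a)" for j j' t t'
  proof -
    define e where "e = j' - j"
    have e: "0 < e" "e < CHAR('a)" using that by (auto simp: e_def)
    have jj: "j' = j + e" using that(1) unfolding e_def by simp
    have "of_nat j * a + t = of_nat j * a + (of_nat e * a + t')"
      using that(5) unfolding jj of_nat_add distrib_right add.assoc .
    hence "t = of_nat e * a + t'" by (rule add_left_imp_eq)
    hence "of_nat e * a = t - t'" by (simp add: eq_diff_eq)
    hence ea: "of_nat e * a \<in> fspan A" using fspan_diff[OF assms(2) that(3) that(4)] by (simp only:)
    have "\<not> CHAR('a) dvd e" using e(1) e(2) dvd_imp_le leD by blast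
    hence "coprime e CHAR('a)" using p prime_imp_coprime coprime_commute by blast
    then obtain y where "[e * y = Suc 0] (mod CHAR('a))" using cong_solve_coprime_nat by blast
    hence one: "(of_nat (e * y) :: 'a) = 1"
      using of_nat_eq_iff_cong_CHAR[where 'a='a, of "e * y" "Suc 0"] by (simp del: of_nat_mult)
    have "of_nat y * (of_nat e * a) = of_nat (e * y) * a"
      by (simp only: of_nat_mult mult.assoc mult.commute mult.left_commute)
    also have "\<dots> = a" by (simp only: one mult_1)
    finally have eq: "of_nat y * (of_nat e * a) = a" .
    have "a \<in> fspan A" using fspan_smult[OF ea, of y] by (simp only: eq)
    with assms(1) show False by simp
  qed
  show ?thesis
  proof (rule inj_onI)
    fix u v assume hu: "u \<in> {..<CHAR('a)} \<times> fspan A" and hv: "v \<in> {..<CHAR('a)} \<times> fspan A"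
      and huv: "(\<lambda>(j,t). of_nat j * a + t) u = (\<lambda>(j,t). of_nat j * a + t) v"
    obtain j t where u: "u = (j,t)" by (cases u)
    obtain j' t' where v: "v = (j',t')" by (cases v)
    have h: "j < CHAR('a)" "t \<in> fspan A" "j' < CHAR('a)" "t' \<in> fspan A"
      "of_nat j * a + t = of_nat j' * a + (t'::'a)" using hu hv huv u v by auto
    show "u = v"
    proof (cases j j' rule: linorder_cases)
      case less thus ?thesis using key[OF less h(3) h(2) h(4) h(5)] by blast
    next
      case greater thus ?thesis using key[OF greater h(1) h(4) h(2) h(5)[symmetric]] by blast
    next
      case equal
      hence "t = t'" using h(5) by simp
      thus ?thesis using equal u v by simp
    qed
  qed
qed

lemma fspan_card:
  assumes "finite (A::'a::field set)" "finite (UNIV::'a set)"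
  shows "\<exists>k. card (fspan A) = CHAR('a) ^ k"
  using assms(1)
proof (induction A rule: finite_induct)
  case empty
  have "fspan ({}::'a set) = {0}" by (auto simp: fspan_def)
  thus ?case by (intro exI[of _ 0]) simp
next
  case (insert a A)
  have cp: "CHAR('a) > 0" by (rule finite_imp_CHAR_pos[OF assms(2)])
  from insert.IH obtain k where k: "card (fspan A) = CHAR('a) ^ k" by (elim exE)
  show ?case
  proof (cases "a \<in> fspan A")
    case True
    have "fspan (insert a A) = fspan A"
    proof
      show "fspan (insert a A) \<subseteq> fspan A"
      proof
        fix x assume "x \<in> fspan (insert a A)"
        then obtain j t where x: "x = of_nat j * a + t" and t: "t \<in> fspan A"
          unfolding fspan_insert[OF insert(1,2) cp] by auto
        show "x \<in> fspan A" unfolding x by (rule fspan_add[OF fspan_smult[OF True] t])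
      qed
      show "fspan A \<subseteq> fspan (insert a A)"
      proof
        fix t assume "t \<in> fspan A"
        thus "t \<in> fspan (insert a A)" unfolding fspan_insert[OF insert(1,2) cp]
          using cp by (intro image_eqI[of _ _ "(0,t)"]) auto
      qed
    qed
    thus ?thesis using k by auto
  next
    case False
    have "card (fspan (insert a A)) = card ({..<CHAR('a)} \<times> fspan A)"
      unfolding fspan_insert[OF insert(1,2) cp] by (rule card_image[OF fspan_inj[OF False cp]])
    also have "\<dots> = CHAR('a) ^ Suc k" using k by (simp add: card_cartesian_product)
    finally show ?thesis by blast
  qed
qed

lemma card_prime_power: "\<exists>k. CARD('a::{finite,field}) = CHAR('a) ^ k"
proof -
  have "fspan (UNIV::'a set) = UNIV"
  proof -
    have "x \<in> fspan UNIV" for x :: 'a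
    proof -
    have "(\<Sum>b\<in>UNIV. of_nat (if b = x then 1 else 0) * b) = (\<Sum>b\<in>UNIV. if b = x then b else 0)"
      by (rule sum.cong) auto
    hence "(\<Sum>b\<in>UNIV. of_nat (if b = x then 1 else 0) * b) = x" by simp
    thus "x \<in> fspan UNIV" using fspanI[of "\<lambda>b. if b = x then 1 else 0" UNIV] by simp
  qed
  thus ?thesis by blast
  qed
  thus ?thesis using fspan_card[of "UNIV::'a set"] by simp
qed

lemma card_ge2: "CARD('a::{finite,field}) \<ge> 2"
proof -
  have "card {0::'a, 1} \<le> card (UNIV::'a set)" by (rule card_mono) auto
  thus ?thesis by simp
qed

lemma char_prime: "prime CHAR('a::{finite,field})"
  by (rule prime_CHAR_semidom[OF finite_imp_CHAR_pos]) simp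

lemma elem_pow_card: "(c::'a::{finite,field}) ^ CARD('a) = c"
proof (cases "c = 0")
  case False
  have "c * (\<Prod>y\<in>UNIV-{0}. c * y) = c * c ^ (card (UNIV :: 'a set) - 1) * \<Prod>(UNIV-{0})"
    by (simp add: prod.distrib mult_ac)
  also have "c * c ^ (card (UNIV :: 'a set) - 1) = c ^ Suc (card (UNIV :: 'a set) - 1)"
    by (subst power_Suc) auto
  also have "Suc (card (UNIV :: 'a set) - 1) = card (UNIV :: 'a set)"
    using finite_UNIV_card_ge_0[where ?'a = 'a] by simp
  also have "(\<Prod>y\<in>UNIV-{0}. c * y) = (\<Prod>y\<in>UNIV-{0}. y)"
    by (rule prod.reindex_bij_witness[of _ "\<lambda>y. y / c" "\<lambda>y. c * y"]) (use False in auto)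
  finally show ?thesis
    by simp
qed (use finite_UNIV_card_ge_0[where ?'a = 'a] in auto)

lemma elem_pow_card_pow: "(c::'a::{finite,field}) ^ (CARD('a) ^ e) = c"
  by (induction e) (simp_all add: elem_pow_card power_mult)

lemma frob_add: "((y::'a::{finite,field} poly) + z) ^ (CARD('a) ^ e) = y ^ (CARD('a) ^ e) + z ^ (CARD('a) ^ e)"
proof -
  obtain k where k: "CARD('a) = CHAR('a) ^ k" using card_prime_power by blast
  have "CARD('a) ^ e = CHAR('a poly) ^ (k * e)" by (simp add: k power_mult)
  thus ?thesis by (intro freshmans_dream') (simp_all add: char_prime)
qed

lemma frob_sum: "(sum (g::'b \<Rightarrow> 'a::{finite,field} poly) A) ^ (CARD('a) ^ e) = (\<Sum>i\<in>A. g i ^ (CARD('a) ^ e))"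
proof -
  obtain k where k: "CARD('a) = CHAR('a) ^ k" using card_prime_power by blast
  have "CARD('a) ^ e = CHAR('a poly) ^ (k * e)" by (simp add: k power_mult)
  thus ?thesis by (intro freshmans_dream_sum') (simp_all add: char_prime)
qed

lemma frob_diff: "((y::'a::{finite,field} poly) - z) ^ (CARD('a) ^ e) = y ^ (CARD('a) ^ e) - z ^ (CARD('a) ^ e)"
proof -
  have "y ^ (CARD('a) ^ e) = ((y - z) + z) ^ (CARD('a) ^ e)" by simp
  also have "\<dots> = (y - z) ^ (CARD('a) ^ e) + z ^ (CARD('a) ^ e)" by (rule frob_add)
  finally show ?thesis by simp
qed

lemma frob_monom: "(monom (c::'a::{finite,field}) n) ^ (CARD('a) ^ e) = monom c (n * CARD('a) ^ e)"
  by (simp add: monom_power elem_pow_card_pow)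

lemma frob_const: "[:c::'a::{finite,field}:] ^ (CARD('a) ^ e) = [:c:]"
  using frob_monom[of c 0 e] by (simp add: monom_0)

lemma pCons_as: "pCons a (p::'a::comm_semiring_1 poly) = [:a:] + monom 1 1 * p"
  by (simp add: monom_Suc monom_0)

lemma frob_cong:
  fixes f :: "'a::{finite,field} poly"
  assumes "f dvd monom 1 (CARD('a) ^ e) - monom 1 1"
  shows "f dvd r ^ (CARD('a) ^ e) - r"
proof (induction r rule: pCons_induct)
  case 0
  have "CARD('a) ^ e > 0" by simp
  hence "(0::'a poly) ^ (CARD('a) ^ e) = 0" by (rule zero_power)
  thus ?case by (simp only: diff_zero dvd_0_right)
next
  case (pCons a p)
  let ?Q = "CARD('a) ^ e"
  have pa: "pCons a p = [:a:] + monom 1 1 * p" by (rule pCons_as)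
  have "(pCons a p) ^ ?Q = [:a:] ^ ?Q + (monom 1 1 * p) ^ ?Q"
    unfolding pa by (rule frob_add)
  also have "\<dots> = [:a:] + monom 1 ?Q * p ^ ?Q"
    by (simp only: frob_const power_mult_distrib frob_monom mult_1)
  finally have e1: "(pCons a p) ^ ?Q = [:a:] + monom 1 ?Q * p ^ ?Q" .
  have "(pCons a p) ^ ?Q - pCons a p = ([:a:] + monom 1 ?Q * p ^ ?Q) - ([:a:] + monom 1 1 * p)"
    by (simp only: e1 pa[symmetric])
  also have "\<dots> = monom 1 ?Q * p ^ ?Q - monom 1 1 * p" by simp
  also have "\<dots> = (monom 1 ?Q - monom 1 1) * p ^ ?Q + monom 1 1 * (p ^ ?Q - p)"
    by (simp add: left_diff_distrib right_diff_distrib)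
  finally have e2: "(pCons a p) ^ ?Q - pCons a p = (monom 1 ?Q - monom 1 1) * p ^ ?Q + monom 1 1 * (p ^ ?Q - p)" .
  show ?case unfolding e2 by (rule dvd_add[OF dvd_mult2[OF assms] dvd_mult[OF pCons.IH]])
qed

lemma root_count:
  fixes f :: "'a::field poly" and g :: "'a poly poly"
  assumes pf: "prime_elem f"
  shows "\<not> f dvd lead_coeff g \<Longrightarrow> (\<forall>r\<in>R. f dvd poly g r) \<Longrightarrow>
         (\<forall>r\<in>R. \<forall>r'\<in>R. f dvd r - r' \<longrightarrow> r = r') \<Longrightarrow> card R \<le> degree g"
proof (induction "degree g" arbitrary: g R)
  case 0
  show ?case
  proof (cases "R = {}")
    case False
    then obtain r0 where r0: "r0 \<in> R" by blast
    obtain a where ga: "g = [:a:]" using degree0_coeffs[OF 0(1)[symmetric]] by blast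
    have "poly g r0 = lead_coeff g" unfolding ga by simp
    thus ?thesis using 0(2,3) r0 by auto
  qed simp
next
  case (Suc n)
  show ?case
  proof (cases "R = {} \<or> infinite R")
    case True thus ?thesis by auto
  next
    case False
    then obtain r0 where r0: "r0 \<in> R" and fin: "finite R" by blast
    define h where "h = synthetic_div g r0"
    define c where "c = poly g r0"
    have geq: "[:-r0, 1:] * h + [:c:] = g" unfolding h_def c_def by (rule synthetic_div_correct')
    have fc: "f dvd c" using Suc.prems(2) r0 unfolding c_def by blast
    have hnz: "h \<noteq> 0"
    proof
      assume "h = 0"
      hence "g = [:c:]" using geq by simp
      thus False using Suc.hyps(2) by simp
    qed
    have "degree ([:-r0, 1:] * h) = degree [:-r0, 1:] + degree h"
      by (rule degree_mult_eq) (simp_all add: hnz)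
    hence dm: "degree ([:-r0, 1:] * h) = Suc (degree h)" by simp
    have dg: "degree g = Suc (degree h)"
      using geq dm degree_add_eq_left[of "[:c:]" "[:-r0, 1:] * h"] by simp
    have lc: "lead_coeff g = lead_coeff h"
    proof -
      have "lead_coeff g = coeff ([:-r0, 1:] * h + [:c:]) (Suc (degree h))" using geq dg by simp
      also have "\<dots> = coeff ([:-r0, 1:] * h) (Suc (degree h))" by simp
      also have "\<dots> = lead_coeff ([:-r0, 1:] * h)" using dm by simp
      also have "\<dots> = lead_coeff h" unfolding lead_coeff_mult by simp
      finally show ?thesis .
    qed
    have hR: "\<forall>r\<in>R - {r0}. f dvd poly h r"
    proof
      fix r assume r: "r \<in> R - {r0}"
      have "poly g r = (r - r0) * poly h r + c"
        using arg_cong[OF geq, of "\<lambda>p. poly p r"] by (simp add: algebra_simps)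
      hence "f dvd (r - r0) * poly h r"
        using Suc.prems(2) r fc by (metis DiffD1 dvd_add_left_iff add.commute)
      moreover have "\<not> f dvd r - r0" using Suc.prems(3) r r0 by blast
      ultimately show "f dvd poly h r" using pf prime_elem_dvd_mult_iff by blast
    qed
    have "card (R - {r0}) \<le> degree h"
      using Suc.hyps(1)[of h "R - {r0}"] Suc.hyps(2) dg Suc.prems(1) lc hR Suc.prems(3) by auto
    moreover have "card R = Suc (card (R - {r0}))" by (rule card_Suc_Diff1[OF fin r0, symmetric])
    ultimately show ?thesis using dg by simp
  qed
qed

lemma coeff_sum_monoms:
  "coeff (\<Sum>i<d. monom (c i) i) n = (if n < d then c n else 0)"
proof -
  have "coeff (\<Sum>i<d. monom (c i) i) n = (\<Sum>i<d. if i = n then c i else 0)"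
    by (simp add: coeff_sum)
  also have "\<dots> = (if n < d then c n else 0)" by (simp add: sum.delta')
  finally show ?thesis .
qed

lemma deg_bound:
  fixes f :: "'a::{finite,field} poly"
  assumes irr: "irreducible f" and dv: "f dvd monom 1 (CARD('a) ^ E) - monom 1 1" and E: "E \<ge> 1"
  shows "degree f \<le> E"
proof -
  define q where "q = CARD('a)"
  define d where "d = degree f"
  define Q where "Q = q ^ E"
  have q2: "q \<ge> 2" unfolding q_def by (rule card_ge2)
  have "q ^ 1 \<le> q ^ E" using q2 E by (intro power_increasing) auto
  hence Q2: "Q \<ge> 2" using q2 unfolding Q_def by simp
  have pf: "prime_elem f" using irr by (rule field_poly_irreducible_imp_prime)
  have nu: "\<not> f dvd 1" using irr by (simp add: irreducible_def)
  have fnz: "f \<noteq> 0" using irr by (simp add: irreducible_def)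
  have d1: "d \<ge> 1"
  proof (rule ccontr)
    assume "\<not> d \<ge> 1"
    hence "degree f = 0" unfolding d_def by simp
    hence "is_unit f" using fnz is_unit_iff_degree by blast
    thus False using nu by simp
  qed
  define g :: "'a poly poly" where "g = monom 1 Q - monom 1 1"
  have cg: "coeff g n = (if n = Q then 1 else if n = 1 then -1 else 0)" for n
    unfolding g_def using Q2 by auto
  have dg: "degree g = Q"
  proof (rule antisym)
    show "degree g \<le> Q" by (rule degree_le) (use cg Q2 in auto)
    show "Q \<le> degree g" by (rule le_degree) (simp add: cg)
  qed
  have lg: "lead_coeff g = 1" using dg cg by simp
  have pg: "poly g r = r ^ Q - r" for r unfolding g_def by (simp add: poly_monom)
  define R where "R = (\<lambda>c. \<Sum>i<d. monom (c i) i) ` (PiE {..<d} (\<lambda>_. (UNIV::'a set)))"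
  have inj: "inj_on (\<lambda>c. \<Sum>i<d. monom (c i) i) (PiE {..<d} (\<lambda>_. (UNIV::'a set)))"
  proof (rule inj_onI)
    fix c c' assume c: "c \<in> PiE {..<d} (\<lambda>_. (UNIV::'a set))" and c': "c' \<in> PiE {..<d} (\<lambda>_. (UNIV::'a set))"
      and eq: "(\<Sum>i<d. monom (c i) i) = (\<Sum>i<d. monom (c' i) i)"
    show "c = c'"
    proof (rule PiE_ext[OF c c'])
      fix i assume "i \<in> {..<d}"
      thus "c i = c' i" using arg_cong[OF eq, of "\<lambda>p. coeff p i"] by (simp add: coeff_sum_monoms)
    qed
  qed
  have cardR: "card R = q ^ d"
    unfolding R_def card_image[OF inj] by (simp add: card_PiE q_def)
  have rootsR: "\<forall>r\<in>R. f dvd poly g r"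
    unfolding pg Q_def q_def using frob_cong[OF dv] by blast
  have coeffR: "coeff r n = 0" if "r \<in> R" "n \<ge> d" for r n
    using that unfolding R_def by (auto simp: coeff_sum_monoms)
  have sepR: "\<forall>r\<in>R. \<forall>r'\<in>R. f dvd r - r' \<longrightarrow> r = r'"
  proof (intro ballI impI)
    fix r r' assume r: "r \<in> R" and r': "r' \<in> R" and fd: "f dvd r - r'"
    show "r = r'"
    proof (rule ccontr)
      assume "r \<noteq> r'"
      hence nz: "r - r' \<noteq> 0" by simp
      have "degree (r - r') < d"
      proof (rule ccontr)
        assume "\<not> degree (r - r') < d"
        hence "coeff (r - r') (degree (r - r')) = 0" using coeffR[OF r] coeffR[OF r'] by simp
        thus False using nz leading_coeff_0_iff[of "r - r'"] by blast
      qed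
      moreover have "d \<le> degree (r - r')" unfolding d_def by (rule dvd_imp_degree_le[OF fd nz])
      ultimately show False by simp
    qed
  qed
  have "card R \<le> degree g"
    by (rule root_count[OF pf]) (use nu lg rootsR sepR in auto)
  hence qq: "q ^ d \<le> q ^ E" unfolding cardR dg Q_def .
  have q1: "1 < q" using q2 by linarith
  have "d \<le> E" by (rule power_le_imp_le_exp[OF q1 qq])
  thus ?thesis unfolding d_def .
qed

lemma nat_ineq:
  assumes a2: "(a::nat) \<ge> 2" and s2: "s \<ge> 2"
  shows "s * (a - 1) < a ^ s - 1"
  using s2
proof (induction s rule: nat_induct_at_least)
  case base
  obtain b where b: "a = b + 2" using a2 by (metis add.commute le_Suc_ex)
  show ?case unfolding b by (simp add: power2_eq_square algebra_simps)
next
  case (Suc n)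
  have IH: "n * (a - 1) < a ^ n - 1" using Suc by blast
  have an: "a ^ n \<ge> 1" using a2 by simp
  have h2: "a - 1 \<le> a ^ n * (a - 1)" using an by simp
  have aa: "a = (a - 1) + 1" using a2 by simp
  have "a ^ n * a = a ^ n * ((a - 1) + 1)" using aa by (rule arg_cong)
  hence e0: "a ^ n * a = a ^ n * (a - 1) + a ^ n" by (simp only: distrib_left mult_1_right)
  have e2: "a ^ Suc n - 1 = a ^ n * (a - 1) + (a ^ n - 1)" using e0 an by (simp add: mult.commute)
  have e1: "Suc n * (a - 1) = (a - 1) + n * (a - 1)" by simp
  have "Suc n * (a - 1) < a ^ n * (a - 1) + (a ^ n - 1)" unfolding e1 by (rule add_le_less_mono[OF h2 IH])
  also have "\<dots> = a ^ Suc n - 1" using e2 by simp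
  finally show ?case .
qed

lemma L_repr:
  fixes L :: "'a::comm_ring_1 poly"
  assumes qs: "is_q_s_poly q s L" and q2: "q \<ge> 2" and s1: "s \<ge> 1" and dL: "degree L = q ^ (s * m)"
  shows "L = (\<Sum>j\<le>m. monom (coeff L (q ^ (s * j))) (q ^ (s * j)))"
proof (rule poly_eqI)
  fix n
  have inj: "q ^ (s * j) = q ^ (s * j') \<longleftrightarrow> j = j'" for j j'
    using q2 s1 by (simp add: power_inject_exp)
  have rhs: "coeff (\<Sum>j\<le>m. monom (coeff L (q ^ (s * j))) (q ^ (s * j))) n
        = (\<Sum>j\<le>m. if q ^ (s * j) = n then coeff L (q ^ (s * j)) else 0)"
    by (simp add: coeff_sum)
  show "coeff L n = coeff (\<Sum>j\<le>m. monom (coeff L (q ^ (s * j))) (q ^ (s * j))) n"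
  proof (cases "coeff L n = 0")
    case True
    have "(\<Sum>j\<le>m. if q ^ (s * j) = n then coeff L (q ^ (s * j)) else 0) = 0"
      by (rule sum.neutral) (use True in auto)
    thus ?thesis using rhs True by simp
  next
    case False
    then obtain j where j: "n = q ^ j" "s dvd j" using qs unfolding is_q_s_poly_def by blast
    then obtain j0 where j0: "n = q ^ (s * j0)" by (auto elim: dvdE)
    have "n \<le> degree L" using False by (rule le_degree)
    hence "q ^ (s * j0) \<le> q ^ (s * m)" by (simp only: j0 dL)
    moreover have q1: "1 < q" using q2 by linarith
    ultimately have "s * j0 \<le> s * m" using power_le_imp_le_exp by blast
    hence jm: "j0 \<le> m" using s1 by simp
    have "(\<Sum>j\<le>m. if q ^ (s * j) = n then coeff L (q ^ (s * j)) else 0)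
        = (\<Sum>j\<le>m. if j = j0 then coeff L n else 0)"
      by (rule sum.cong) (auto simp: j0 inj)
    also have "\<dots> = coeff L n" using jm by simp
    finally show ?thesis using rhs by simp
  qed
qed

theorem theorem7p7:
  fixes L :: "'a::{finite,field} poly" and s :: nat
  assumes "is_q_poly CARD('a) L"
    and "irreducible (L div [:0, 1:])"
    and "s > 1"
  shows "\<not> is_q_s_poly CARD('a) s L"
proof
  assume qs: "is_q_s_poly CARD('a) s L"
  define f where "f = L div [:0, 1:]"
  have irr: "irreducible f" using assms(2) unfolding f_def .
  have fnz: "f \<noteq> 0" and nu: "\<not> f dvd 1" using irr by (simp_all add: irreducible_def)
  have pf: "prime_elem f" using irr by (rule field_poly_irreducible_imp_prime)
  have q2: "CARD('a) \<ge> 2" by (rule card_ge2)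
  have s1: "s \<ge> 1" and s2: "s \<ge> 2" using assms(3) by auto
  have Lnz: "L \<noteq> 0" using fnz unfolding f_def by auto
  have c0: "coeff L 0 = 0"
  proof (rule ccontr)
    assume "coeff L 0 \<noteq> 0"
    then obtain j where "0 = CARD('a) ^ j" using qs unfolding is_q_s_poly_def by blast
    thus False by simp
  qed
  have "[:0, 1:] dvd L" using c0 by (simp add: dvd_iff_poly_eq_0 poly_0_coeff_0)
  hence Lf: "L = [:0, 1:] * f" unfolding f_def by (rule dvd_mult_div_cancel[symmetric])
  hence fL: "f dvd L" by (metis dvd_triv_right)
  obtain m where dL: "degree L = CARD('a) ^ (s * m)"
  proof -
    have "coeff L (degree L) \<noteq> 0" using Lnz by simp
    then obtain j where "degree L = CARD('a) ^ j" "s dvd j" using qs unfolding is_q_s_poly_def by blast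
    thus ?thesis using that by (auto elim: dvdE)
  qed
  have "degree L = degree [:0, 1:: 'a:] + degree f"
    unfolding Lf by (rule degree_mult_eq) (simp_all add: fnz)
  hence df: "degree f = CARD('a) ^ (s * m) - 1" using dL by simp
  have m1: "m \<ge> 1"
  proof (rule ccontr)
    assume "\<not> m \<ge> 1"
    hence "m = 0" by simp
    hence "degree f = 0" using df by simp
    hence "is_unit f" using fnz is_unit_iff_degree by blast
    thus False using nu by simp
  qed
  have sm2: "2 * 1 \<le> s * m" by (rule mult_le_mono[OF s2 m1])
  have "CARD('a) ^ 2 \<le> CARD('a) ^ (s * m)"
    using q2 sm2 by (intro power_increasing) simp_all
  moreover have "CARD('a) ^ 2 \<ge> 4" using q2 by (metis power2_nat_le_eq_le power2_eq_square numeral_Bit0 mult_2 le_refl)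
  ultimately have df3: "degree f \<ge> 3" using df by simp
  define b where "b j = coeff L (CARD('a) ^ (s * j))" for j
  have Lrep: "L = (\<Sum>j\<le>m. monom (b j) (CARD('a) ^ (s * j)))"
    unfolding b_def by (rule L_repr[OF qs q2 s1 dL])
  have bm: "b m \<noteq> 0" unfolding b_def using dL Lnz by (metis leading_coeff_0_iff)
  define W where "W = {w :: 'a poly. \<forall>n. coeff w n \<noteq> 0 \<longrightarrow> (\<exists>k<m. n = CARD('a) ^ (s * k))}"
  have Wlin: "(\<Sum>j\<in>A. smult (a j) (w j)) \<in> W" if "\<forall>j\<in>A. w j \<in> W" for A a w
    unfolding W_def
  proof (intro CollectI allI impI)
    fix n assume "coeff (\<Sum>j\<in>A. smult (a j) (w j)) n \<noteq> 0"
    hence "(\<Sum>j\<in>A. a j * coeff (w j) n) \<noteq> 0" by (simp add: coeff_sum)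
    then obtain j where "j \<in> A" "a j * coeff (w j) n \<noteq> 0" by (meson sum.neutral)
    moreover from this have "coeff (w j) n \<noteq> 0" by auto
    ultimately show "\<exists>k<m. n = CARD('a) ^ (s * k)" using that unfolding W_def by blast
  qed
  have Wsm: "smult c w \<in> W" if "w \<in> W" for c w
    using that unfolding W_def by auto
  have Wmon: "monom 1 (CARD('a) ^ (s * k)) \<in> W" if "k < m" for k
    using that unfolding W_def by auto
  have W0: "0 \<in> W" unfolding W_def by simp
  have RED: "\<exists>w\<in>W. f dvd monom 1 (CARD('a) ^ (s * i)) - w" for i
  proof (induction i rule: less_induct)
    case (less i)
    show ?case
    proof (cases "i < m")
      case True
      thus ?thesis using Wmon[OF True] by (intro bexI[of _ "monom 1 (CARD('a) ^ (s * i))"]) simp_all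
    next
      case False
      define e where "e = s * (i - m)"
      define n where "n j = CARD('a) ^ (s * (j + (i - m)))" for j
      have nm: "n m = CARD('a) ^ (s * i)" unfolding n_def using False by simp
      have "L ^ (CARD('a) ^ e) = (\<Sum>j\<le>m. (monom (b j) (CARD('a) ^ (s * j))) ^ (CARD('a) ^ e))"
        by (subst Lrep) (rule frob_sum)
      also have "\<dots> = (\<Sum>j\<le>m. monom (b j) (n j))"
        by (rule sum.cong) (simp_all add: frob_monom n_def e_def power_add[symmetric] distrib_left)
      also have "\<dots> = (\<Sum>j<m. monom (b j) (n j)) + monom (b m) (n m)"
        by (simp add: lessThan_Suc_atMost[symmetric])
      finally have LQ: "L ^ (CARD('a) ^ e) = (\<Sum>j<m. monom (b j) (n j)) + monom (b m) (CARD('a) ^ (s * i))"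
        unfolding nm .
      have fLQ: "f dvd L ^ (CARD('a) ^ e)" by (rule dvd_trans[OF fL dvd_power]) simp
      have "\<forall>j\<in>{..<m}. \<exists>w. w \<in> W \<and> f dvd monom 1 (n j) - w"
      proof
        fix j assume "j \<in> {..<m}"
        hence "j + (i - m) < i" using False by auto
        thus "\<exists>w. w \<in> W \<and> f dvd monom 1 (n j) - w" using less.IH unfolding n_def by blast
      qed
      then obtain wf where wf: "\<forall>j\<in>{..<m}. wf j \<in> W \<and> f dvd monom 1 (n j) - wf j"
        by (metis bchoice)
      define w where "w = smult (- inverse (b m)) (\<Sum>j<m. smult (b j) (wf j))"
      have wW: "w \<in> W" unfolding w_def by (rule Wsm, rule Wlin) (use wf in blast)
      have S: "(\<Sum>j<m. smult (b j) (monom 1 (n j) - wf j))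
               = (\<Sum>j<m. monom (b j) (n j)) - (\<Sum>j<m. smult (b j) (wf j))"
        by (simp add: smult_diff_right sum_subtractf smult_monom)
      have "L ^ (CARD('a) ^ e) - (\<Sum>j<m. smult (b j) (monom 1 (n j) - wf j))
            = monom (b m) (CARD('a) ^ (s * i)) + (\<Sum>j<m. smult (b j) (wf j))"
        unfolding S LQ by simp
      hence "smult (inverse (b m)) (L ^ (CARD('a) ^ e) - (\<Sum>j<m. smult (b j) (monom 1 (n j) - wf j)))
            = monom 1 (CARD('a) ^ (s * i)) - w"
        unfolding w_def using bm by (simp add: smult_add_right smult_monom)
      moreover have "f dvd smult (inverse (b m)) (L ^ (CARD('a) ^ e) - (\<Sum>j<m. smult (b j) (monom 1 (n j) - wf j)))"
      proof (rule dvd_smult, rule dvd_diff[OF fLQ], rule dvd_sum)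
        fix j assume "j \<in> {..<m}"
        thus "f dvd smult (b j) (monom 1 (n j) - wf j)" using wf by (intro dvd_smult) blast
      qed
      ultimately show ?thesis using wW by auto
    qed
  qed
  obtain wsel where wsel: "\<And>i. wsel i \<in> W \<and> f dvd monom 1 (CARD('a) ^ (s * i)) - wsel i"
    using RED by metis
  have wnz: "wsel i \<noteq> 0" for i
  proof
    assume "wsel i = 0"
    hence "f dvd monom 1 (CARD('a) ^ (s * i))" using wsel[of i] by simp
    hence "f dvd (monom 1 1) ^ (CARD('a) ^ (s * i))" by (simp add: monom_power)
    hence "f dvd monom 1 1" using pf prime_elem_dvd_power by blast
    hence "degree f \<le> degree (monom (1::'a) 1)" by (rule dvd_imp_degree_le) simp
    thus False using df3 by (simp add: degree_monom_eq)
  qed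
  define phi where "phi w = (\<lambda>k\<in>{..<m}. coeff w (CARD('a) ^ (s * k)))" for w :: "'a poly"
  have phi_inj: "inj_on phi W"
  proof (rule inj_onI)
    fix w w' assume w: "w \<in> W" and w': "w' \<in> W" and eq: "phi w = phi w'"
    show "w = w'"
    proof (rule poly_eqI)
      fix n
      show "coeff w n = coeff w' n"
      proof (cases "\<exists>k<m. n = CARD('a) ^ (s * k)")
        case True
        then obtain k where "k < m" "n = CARD('a) ^ (s * k)" by blast
        thus ?thesis using fun_cong[OF eq, of k] unfolding phi_def by simp
      next
        case False
        hence "coeff w n = 0" "coeff w' n = 0" using w w' unfolding W_def by blast+
        thus ?thesis by simp
      qed
    qed
  qed
  have phi_img: "phi ` W \<subseteq> PiE {..<m} (\<lambda>_. (UNIV :: 'a set))" unfolding phi_def by (intro image_subsetI) (simp only: restrict_PiE_iff, simp)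
  have finPi: "finite (PiE {..<m} (\<lambda>_. (UNIV :: 'a set)))" by (simp add: finite_PiE)
  have cardPi: "card (PiE {..<m} (\<lambda>_. (UNIV :: 'a set))) = CARD('a) ^ m" by (simp add: card_PiE)
  have finW: "finite W" by (rule inj_on_finite[OF phi_inj phi_img finPi])
  have cardW: "card W \<le> CARD('a) ^ m" using card_inj_on_le[OF phi_inj phi_img finPi] cardPi by simp
  have cardW0: "card (W - {0}) \<le> CARD('a) ^ m - 1" using cardW W0 finW by simp
  have img: "wsel ` {..<CARD('a) ^ m} \<subseteq> W - {0}" using wsel wnz by auto
  have "\<not> inj_on wsel {..<CARD('a) ^ m}"
  proof
    assume inj: "inj_on wsel {..<CARD('a) ^ m}"
    have "CARD('a) ^ m \<le> card (W - {0})"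
      using card_inj_on_le[OF inj img] finW by simp
    hence le: "CARD('a) ^ m \<le> CARD('a) ^ m - 1" using cardW0 by (rule le_trans)
    have pos: "CARD('a) ^ m > 0" by simp
    show False using le pos by arith
  qed
  then obtain i j where ij: "i < j" "j < CARD('a) ^ m" "wsel i = wsel j"
    unfolding inj_on_def by (metis lessThan_iff nat_neq_iff)
  define E where "E = s * (j - i)"
  define Q where "Q = CARD('a) ^ (s * i)"
  have E1: "E \<ge> 1" unfolding E_def using ij s1 by simp
  have "f dvd (monom 1 (CARD('a) ^ (s * i)) - wsel i) - (monom 1 (CARD('a) ^ (s * j)) - wsel j)"
    using wsel[of i] wsel[of j] by (blast intro: dvd_diff)
  hence d1: "f dvd monom 1 (CARD('a) ^ (s * i)) - monom 1 (CARD('a) ^ (s * j))" using ij by simp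
  have "CARD('a) ^ E * Q = CARD('a) ^ (s * j)"
    unfolding E_def Q_def power_add[symmetric] using ij by (simp add: diff_mult_distrib2)
  hence ej: "monom 1 (CARD('a) ^ (s * j)) = (monom (1::'a) (CARD('a) ^ E)) ^ Q"
    by (simp add: monom_power)
  have ei: "monom 1 (CARD('a) ^ (s * i)) = (monom (1::'a) 1) ^ Q"
    unfolding Q_def by (simp add: monom_power)
  have fd: "(monom 1 1 - monom 1 (CARD('a) ^ E)) ^ Q = (monom (1::'a) 1) ^ Q - (monom 1 (CARD('a) ^ E)) ^ Q"
    unfolding Q_def by (rule frob_diff)
  have "monom 1 (CARD('a) ^ (s * i)) - monom 1 (CARD('a) ^ (s * j))
      = (monom (1::'a) 1 - monom 1 (CARD('a) ^ E)) ^ Q"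
    by (simp only: ei ej fd)
  hence "f dvd (monom 1 1 - monom 1 (CARD('a) ^ E)) ^ Q" using d1 by simp
  hence "f dvd monom 1 1 - monom 1 (CARD('a) ^ E)" using pf prime_elem_dvd_power by blast
  hence "f dvd monom 1 (CARD('a) ^ E) - monom 1 1"
    by (metis dvd_minus_iff minus_diff_eq)
  hence "degree f \<le> E" by (rule deg_bound[OF irr _ E1])
  moreover have "E \<le> s * (CARD('a) ^ m - 1)"
  proof -
    have "j - i \<le> CARD('a) ^ m - 1" using ij by arith
    thus ?thesis unfolding E_def by (rule mult_le_mono2)
  qed
  moreover have "s * (CARD('a) ^ m - 1) < (CARD('a) ^ m) ^ s - 1"
  proof (rule nat_ineq[OF _ s2])
    have "CARD('a) ^ 1 \<le> CARD('a) ^ m" by (rule power_increasing[OF m1]) (use q2 in simp)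
    thus "CARD('a) ^ m \<ge> 2" using q2 by simp
  qed
  moreover have "(CARD('a) ^ m) ^ s = CARD('a) ^ (s * m)" by (simp add: power_mult[symmetric] mult.commute)
  ultimately show False using df by simp
qed

end
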